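(* Let $t_1,x_1,t_2,x_2,b$ satisfy $0<t_1<t_2$, $\frac{x_1}{t_1}>\frac{x_2}{t_2}$, $0\le b\le\frac{(x_2-x_1)^2}{t_2-t_1}+\frac{x_1^2}{t_1}-\frac{x_2^2}{t_2}$. Let $(F,\rho)$ be a feasible pair minimizing $I_2$, with $F$ concave, $F'(t)\le\frac{F(t)}{t}$ on $[t_1,t_2]$, and $\rho$ nonincreasing, and let $g=g(F,\rho,b)$. If $g(t)=0$ for all $t\in[s_1,s_2]\subset[t_1,t_2]$, then on this interval $F(t)=c_1\sqrt t+c_2t$ for some constants $c_1,c_2$, and $\rho(t)=\left(\frac{F(t)}{t}-F'(t)\right)^2$.
   Context: A pair $(F,\rho)$ is feasible if $F:[t_1,t_2]\to\mathbb R$ is absolutely continuous with $F(t_1)=x_1$, $F(t_2)=x_2$, $\rho:[t_1,t_2]\to[0,\infty)$ is Lebesgue measurable, and $g(F,\rho,b)(t):=b-\frac{F(t_1)^2}{t_1}+\int_{t_1}^t(\rho(\tau)-F'(\tau)^2)d\tau+\frac{F(t)^2}{t}\ge0$ for all $t\in[t_1,t_2]$. $I_2(F,\rho)=\frac43\int_{t_1}^{t_2}\rho^{3/2}dt$. *)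

theory Defs
  imports "HOL-Analysis.Analysis"
begin

definition abs_cont_on :: "real \<Rightarrow> real \<Rightarrow> (real \<Rightarrow> real) \<Rightarrow> bool" where
  "abs_cont_on a b F \<longleftrightarrow>
     (\<forall>\<epsilon>>0. \<exists>\<delta>>0. \<forall>(n::nat) (u::nat \<Rightarrow> real) v.
        (\<forall>i<n. a \<le> u i \<and> u i \<le> v i \<and> v i \<le> b) \<and>
        (\<forall>i<n. \<forall>j<n. i \<noteq> j \<longrightarrow> v i \<le> u j \<or> v j \<le> u i) \<and>
        (\<Sum>i<n. v i - u i) < \<delta>
        \<longrightarrow> (\<Sum>i<n. \<bar>F (v i) - F (u i)\<bar>) < \<epsilon>)"

text \<open>g(F,rho,b)(t); F' is the (a.e. existing) derivative of F.\<close>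
definition gfun :: "real \<Rightarrow> (real \<Rightarrow> real) \<Rightarrow> (real \<Rightarrow> real) \<Rightarrow> real \<Rightarrow> real \<Rightarrow> real" where
  "gfun t1 F \<rho> b t =
     b - (F t1)\<^sup>2 / t1 + integral {t1..t} (\<lambda>\<tau>. \<rho> \<tau> - (deriv F \<tau>)\<^sup>2) + (F t)\<^sup>2 / t"

definition feasible :: "real \<Rightarrow> real \<Rightarrow> real \<Rightarrow> real \<Rightarrow> real \<Rightarrow> (real \<Rightarrow> real) \<Rightarrow> (real \<Rightarrow> real) \<Rightarrow> bool" where
  "feasible t1 x1 t2 x2 b F \<rho> \<longleftrightarrow>
     abs_cont_on t1 t2 F \<and> F t1 = x1 \<and> F t2 = x2 \<and>
     \<rho> \<in> borel_measurable (lebesgue_on {t1..t2}) \<and> (\<forall>t\<in>{t1..t2}. 0 \<le> \<rho> t) \<and>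
     (\<lambda>\<tau>. \<rho> \<tau> - (deriv F \<tau>)\<^sup>2) absolutely_integrable_on {t1..t2} \<and>
     (\<forall>t\<in>{t1..t2}. gfun t1 F \<rho> b t \<ge> 0)"

definition I2 :: "real \<Rightarrow> real \<Rightarrow> (real \<Rightarrow> real) \<Rightarrow> ennreal" where
  "I2 t1 t2 \<rho> = ennreal (4/3) * (\<integral>\<^sup>+ t. indicator {t1..t2} t * ennreal (\<rho> t powr (3/2)) \<partial>lborel)"

end

theory Submission
  imports Defs
begin


lemma countable_negligible: "countable (S::real set) \<Longrightarrow> negligible S"
proof -
  assume "countable S"
  have "S = \<Union> ((\<lambda>x. {x}) ` S)" by auto
  moreover have "negligible (\<Union> ((\<lambda>x. {x}) ` S))"
    by (rule negligible_countable_Union) (use \<open>countable S\<close> in auto)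
  ultimately show ?thesis by simp
qed

lemma pos_deriv_le:
  fixes K :: "real \<Rightarrow> real"
  assumes "a \<le> b" "continuous_on {a..b} K" "countable C"
    and der: "\<And>x. x \<in> {a<..<b} - C \<Longrightarrow> \<exists>k>0. (K has_real_derivative k) (at x)"
  shows "K a \<le> K b"
proof (rule ccontr)
  assume "\<not> K a \<le> K b"
  hence lt: "K b < K a" by simp
  have ab: "a < b" using lt assms(1) by (cases "a = b") auto
  have "countable (K ` C)" using assms(3) by simp
  then obtain y where y: "y \<in> {K b<..<K a}" "y \<notin> K ` C"
    using real_interval_avoid_countable_set[OF lt] by blast
  define S where "S = {x \<in> {a..b}. K x = y}"
  have "closed S" unfolding S_def
    by (rule continuous_closed_preimage_constant[OF assms(2)]) simp
  obtain x0 where x0: "a \<le> x0" "x0 \<le> b" "K x0 = y"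
    using IVT2'[of K b y a, OF _ _ assms(1) assms(2)] y(1) by auto
  hence "S \<noteq> {}" unfolding S_def by auto
  have "bdd_above S" unfolding S_def by (auto intro: bdd_aboveI[where M=b])
  define m where "m = Sup S"
  have "m \<in> S" unfolding m_def using closed_contains_Sup \<open>S \<noteq> {}\<close> \<open>bdd_above S\<close> \<open>closed S\<close> by blast
  hence m: "a \<le> m" "m \<le> b" "K m = y" unfolding S_def by auto
  have "m \<noteq> a" using m y(1) by auto
  have "m \<noteq> b" using m y(1) by auto
  have "m \<notin> C" using m y(2) by auto
  have mC: "m \<in> {a<..<b} - C" using m \<open>m \<noteq> a\<close> \<open>m \<noteq> b\<close> \<open>m \<notin> C\<close> by auto
  obtain k where k: "k > 0" "(K has_real_derivative k) (at m)" using der[OF mC] by blast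
  obtain d where d: "d > 0" "\<And>h. h > 0 \<Longrightarrow> h < d \<Longrightarrow> K m < K (m + h)"
    using DERIV_pos_inc_right[OF k(2) k(1)] by blast
  define h where "h = min (d/2) ((b - m)/2)"
  have h: "h > 0" "h < d" "m + h < b" using d(1) mC unfolding h_def by (auto simp: min_def field_simps)
  have "K (m + h) > y" using d(2)[OF h(1) h(2)] m by simp
  have contsub: "continuous_on {m+h..b} K"
    by (rule continuous_on_subset[OF assms(2)]) (use m h in auto)
  obtain z where z: "m + h \<le> z" "z \<le> b" "K z = y"
    using IVT2'[of K b y "m+h", OF _ _ _ contsub] \<open>K (m + h) > y\<close> y(1) h(3) by auto
  have "z \<in> S" unfolding S_def using z m h by auto
  hence "z \<le> m" unfolding m_def using \<open>bdd_above S\<close> by (simp add: cSup_upper)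
  thus False using z h by simp
qed

lemma zero_deriv_const:
  fixes G :: "real \<Rightarrow> real"
  assumes "a \<le> b" "continuous_on {a..b} G" "countable C"
    and der: "\<And>x. x \<in> {a<..<b} - C \<Longrightarrow> (G has_real_derivative 0) (at x)"
  shows "G b = G a"
proof -
  have le: "G a \<le> G b + e * (b - a) - e * (a - a)" and ge: "- G a \<le> - G b + e * (b - a) - e * (a - a)"
    if "e > 0" for e :: real
  proof -
    have "(\<lambda>x. G x + e * (x - a)) a \<le> (\<lambda>x. G x + e * (x - a)) b"
    proof (rule pos_deriv_le[OF assms(1) _ assms(3)])
      show "continuous_on {a..b} (\<lambda>x. G x + e * (x - a))"
        by (intro continuous_intros assms(2))
      fix x assume "x \<in> {a<..<b} - C"
      have "((\<lambda>x. G x + e * (x - a)) has_real_derivative 0 + e) (at x)"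
        by (auto intro!: derivative_eq_intros der[OF \<open>x \<in> _\<close>])
      thus "\<exists>k>0. ((\<lambda>x. G x + e * (x - a)) has_real_derivative k) (at x)" using that by auto
    qed
    thus "G a \<le> G b + e * (b - a) - e * (a - a)" by simp
    have "(\<lambda>x. - G x + e * (x - a)) a \<le> (\<lambda>x. - G x + e * (x - a)) b"
    proof (rule pos_deriv_le[OF assms(1) _ assms(3)])
      show "continuous_on {a..b} (\<lambda>x. - G x + e * (x - a))"
        by (intro continuous_intros assms(2))
      fix x assume "x \<in> {a<..<b} - C"
      have "((\<lambda>x. - G x + e * (x - a)) has_real_derivative - 0 + e) (at x)"
        by (auto intro!: derivative_eq_intros der[OF \<open>x \<in> _\<close>])
      thus "\<exists>k>0. ((\<lambda>x. - G x + e * (x - a)) has_real_derivative k) (at x)" using that by auto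
    qed
    thus "- G a \<le> - G b + e * (b - a) - e * (a - a)" by simp
  qed
  have "G a \<le> G b"
  proof (rule field_le_epsilon)
    fix e :: real assume "e > 0"
    show "G a \<le> G b + e"
    proof (cases "a = b")
      case True thus ?thesis using \<open>e>0\<close> by simp
    next
      case False
      hence "b - a > 0" using assms(1) by simp
      have "G a \<le> G b + (e / (b - a)) * (b - a) - (e / (b-a)) * (a - a)"
        using le[of "e / (b - a)"] \<open>e > 0\<close> \<open>b - a > 0\<close> by simp
      thus ?thesis using \<open>b - a > 0\<close> by simp
    qed
  qed
  moreover have "G b \<le> G a"
  proof (rule field_le_epsilon)
    fix e :: real assume "e > 0"
    show "G b \<le> G a + e"
    proof (cases "a = b")
      case True thus ?thesis using \<open>e>0\<close> by simp
    next
      case False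
      hence "b - a > 0" using assms(1) by simp
      have "- G a \<le> - G b + (e / (b - a)) * (b - a) - (e / (b-a)) * (a - a)"
        using ge[of "e / (b - a)"] \<open>e > 0\<close> \<open>b - a > 0\<close> by simp
      thus ?thesis using \<open>b - a > 0\<close> by simp
    qed
  qed
  ultimately show ?thesis by simp
qed

lemma indef_integral_deriv:
  fixes g :: "real \<Rightarrow> real"
  assumes "g integrable_on {a..b}" "a < x" "x < b" "isCont g x"
  shows "((\<lambda>u. integral {a..u} g) has_real_derivative g x) (at x)"
proof -
  have "((\<lambda>u. integral {a..u} g) has_vector_derivative g x) (at x within ({a..b} - {}))"
    by (rule integral_has_vector_derivative_continuous_at[OF assms(1)])
       (use assms in \<open>auto intro: continuous_at_imp_continuous_within\<close>)
  thus ?thesis using at_within_Icc_at[OF assms(2) assms(3)]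
    by (simp add: has_real_derivative_iff_has_vector_derivative)
qed

lemma ftc_countable:
  fixes G g :: "real \<Rightarrow> real"
  assumes "a \<le> b" "g integrable_on {a..b}" "continuous_on {a..b} G" "countable C"
    and der: "\<And>x. x \<in> {a<..<b} - C \<Longrightarrow> (G has_real_derivative g x) (at x) \<and> isCont g x"
  shows "integral {a..b} g = G b - G a"
proof -
  define P where "P = (\<lambda>x. G x - integral {a..x} g)"
  have "P b = P a"
  proof (rule zero_deriv_const[OF assms(1) _ assms(4)])
    show "continuous_on {a..b} P" unfolding P_def
      by (intro continuous_intros assms(3) indefinite_integral_continuous_1 assms(2))
    fix x assume x: "x \<in> {a<..<b} - C"
    have "(P has_real_derivative g x - g x) (at x)" unfolding P_def
      by (intro derivative_intros) (use der[OF x] indef_integral_deriv[OF assms(2)] x in auto)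
    thus "(P has_real_derivative 0) (at x)" by simp
  qed
  thus ?thesis unfolding P_def by simp
qed

lemma deriv_from_integral:
  fixes f K :: "real \<Rightarrow> real"
  assumes "f integrable_on {a..b}" "a < x" "x < b" "isCont f x"
    and "l < x" "x < m" "\<And>t. t \<in> {l<..<m} \<Longrightarrow> integral {a..t} f = K t"
    and "(K has_real_derivative k) (at x)"
  shows "f x = k"
proof -
  have d1: "((\<lambda>u. integral {a..u} f) has_real_derivative f x) (at x)"
    by (rule indef_integral_deriv) (use assms in auto)
  have "((\<lambda>u. integral {a..u} f) has_real_derivative k) (at x)"
    by (rule has_field_derivative_transform_within_open[OF assms(8), of "{l<..<m}"])
       (use assms(5,6,7) in auto)
  thus ?thesis using d1 DERIV_unique by blast
qed

lemma antimono_integrable: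
  fixes f :: "real \<Rightarrow> real"
  assumes "antimono_on {a..b} f"
  shows "f integrable_on {a..b}"
proof -
  have "mono_on {a..b} (\<lambda>x. - f x)"
    using assms unfolding monotone_on_def by auto
  hence "(\<lambda>x. - f x) integrable_on {a..b}" by (rule integrable_on_mono_on)
  hence "(\<lambda>x. - (- f x)) integrable_on {a..b}" by (rule integrable_neg)
  thus ?thesis by simp
qed


lemma ac_obtain:
  assumes "abs_cont_on a b F" "e > 0"
  obtains d where "d > 0" "\<And>(n::nat) u v.
        (\<forall>i<n. a \<le> u i \<and> u i \<le> v i \<and> v i \<le> b) \<Longrightarrow>
        (\<forall>i<n. \<forall>j<n. i \<noteq> j \<longrightarrow> v i \<le> u j \<or> v j \<le> u i) \<Longrightarrow>
        (\<Sum>i<n. v i - u i) < d \<Longrightarrow> (\<Sum>i<n. \<bar>F (v i) - F (u i)\<bar>) < e"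
proof -
  from assms(1)[unfolded abs_cont_on_def, rule_format, OF assms(2)]
  obtain d where "d > 0" and H: "\<forall>(n::nat) u v.
        (\<forall>i<n. a \<le> u i \<and> u i \<le> v i \<and> v i \<le> b) \<and>
        (\<forall>i<n. \<forall>j<n. i \<noteq> j \<longrightarrow> v i \<le> u j \<or> v j \<le> u i) \<and>
        (\<Sum>i<n. v i - u i) < d
        \<longrightarrow> (\<Sum>i<n. \<bar>F (v i) - F (u i)\<bar>) < e" by blast
  show ?thesis
    by (rule that[OF \<open>d > 0\<close>]) (use H in blast)
qed

lemma ac_continuous:
  assumes "abs_cont_on a b F"
  shows "continuous_on {a..b} F"
  unfolding continuous_on_iff
proof (intro ballI allI impI)
  fix x e :: real assume x: "x \<in> {a..b}" and e: "e > 0"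
  obtain d where d: "d > 0" and H: "\<And>(n::nat) u v.
        (\<forall>i<n. a \<le> u i \<and> u i \<le> v i \<and> v i \<le> b) \<Longrightarrow>
        (\<forall>i<n. \<forall>j<n. i \<noteq> j \<longrightarrow> v i \<le> u j \<or> v j \<le> u i) \<Longrightarrow>
        (\<Sum>i<n. v i - u i) < d \<Longrightarrow> (\<Sum>i<n. \<bar>F (v i) - F (u i)\<bar>) < e"
    using ac_obtain[OF assms e] by blast
  show "\<exists>d>0. \<forall>x'\<in>{a..b}. dist x' x < d \<longrightarrow> dist (F x') (F x) < e"
  proof (intro exI conjI ballI impI)
    fix x' assume x': "x' \<in> {a..b}" "dist x' x < d"
    have "(\<Sum>i<(1::nat). \<bar>F ((\<lambda>_. max x' x) i) - F ((\<lambda>_. min x' x) i)\<bar>) < e"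
      by (rule H) (use x x' in \<open>auto simp: dist_real_def\<close>)
    hence "\<bar>F (max x' x) - F (min x' x)\<bar> < e" by simp
    thus "dist (F x') (F x) < e"
      by (cases "x' \<le> x") (auto simp: dist_real_def max_def min_def abs_minus_commute)
  qed (rule d)
qed

lemma ac_intro:
  assumes "\<And>e. e > 0 \<Longrightarrow> \<exists>d>0. \<forall>(n::nat) u v.
        (\<forall>i<n. a \<le> u i \<and> u i \<le> v i \<and> v i \<le> b) \<longrightarrow>
        (\<forall>i<n. \<forall>j<n. i \<noteq> j \<longrightarrow> v i \<le> u j \<or> v j \<le> u i) \<longrightarrow>
        (\<Sum>i<n. v i - u i) < d \<longrightarrow> (\<Sum>i<n. \<bar>F (v i) - F (u i)\<bar>) < e"
  shows "abs_cont_on a b F"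
  unfolding abs_cont_on_def
proof (intro allI impI)
  fix e :: real assume "e > 0"
  from assms[OF this] obtain d where "d > 0" and H: "\<forall>(n::nat) u v.
        (\<forall>i<n. a \<le> u i \<and> u i \<le> v i \<and> v i \<le> b) \<longrightarrow>
        (\<forall>i<n. \<forall>j<n. i \<noteq> j \<longrightarrow> v i \<le> u j \<or> v j \<le> u i) \<longrightarrow>
        (\<Sum>i<n. v i - u i) < d \<longrightarrow> (\<Sum>i<n. \<bar>F (v i) - F (u i)\<bar>) < e" by blast
  show "\<exists>d>0. \<forall>(n::nat) u v.
        (\<forall>i<n. a \<le> u i \<and> u i \<le> v i \<and> v i \<le> b) \<and>
        (\<forall>i<n. \<forall>j<n. i \<noteq> j \<longrightarrow> v i \<le> u j \<or> v j \<le> u i) \<and>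
        (\<Sum>i<n. v i - u i) < d
        \<longrightarrow> (\<Sum>i<n. \<bar>F (v i) - F (u i)\<bar>) < e"
    by (rule exI[of _ d]) (use \<open>d > 0\<close> H in blast)
qed

lemma ac_diff:
  assumes "abs_cont_on a b f" "abs_cont_on a b g"
  shows "abs_cont_on a b (\<lambda>x. f x - g x)"
proof (rule ac_intro)
  fix e :: real assume e: "e > 0"
  obtain d1 where d1: "d1 > 0" and H1: "\<And>(n::nat) u v.
        (\<forall>i<n. a \<le> u i \<and> u i \<le> v i \<and> v i \<le> b) \<Longrightarrow>
        (\<forall>i<n. \<forall>j<n. i \<noteq> j \<longrightarrow> v i \<le> u j \<or> v j \<le> u i) \<Longrightarrow>
        (\<Sum>i<n. v i - u i) < d1 \<Longrightarrow> (\<Sum>i<n. \<bar>f (v i) - f (u i)\<bar>) < e/2"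
    using ac_obtain[OF assms(1), of "e/2"] e half_gt_zero by blast
  obtain d2 where d2: "d2 > 0" and H2: "\<And>(n::nat) u v.
        (\<forall>i<n. a \<le> u i \<and> u i \<le> v i \<and> v i \<le> b) \<Longrightarrow>
        (\<forall>i<n. \<forall>j<n. i \<noteq> j \<longrightarrow> v i \<le> u j \<or> v j \<le> u i) \<Longrightarrow>
        (\<Sum>i<n. v i - u i) < d2 \<Longrightarrow> (\<Sum>i<n. \<bar>g (v i) - g (u i)\<bar>) < e/2"
    using ac_obtain[OF assms(2), of "e/2"] e half_gt_zero by blast
  show "\<exists>d>0. \<forall>(n::nat) u v.
        (\<forall>i<n. a \<le> u i \<and> u i \<le> v i \<and> v i \<le> b) \<longrightarrow>
        (\<forall>i<n. \<forall>j<n. i \<noteq> j \<longrightarrow> v i \<le> u j \<or> v j \<le> u i) \<longrightarrow>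
        (\<Sum>i<n. v i - u i) < d
        \<longrightarrow> (\<Sum>i<n. \<bar>(f (v i) - g (v i)) - (f (u i) - g (u i))\<bar>) < e"
  proof (intro exI[of _ "min d1 d2"] conjI allI impI)
    show "min d1 d2 > 0" using d1 d2 by simp
    fix n :: nat and u v :: "nat \<Rightarrow> real"
    assume A1: "\<forall>i<n. a \<le> u i \<and> u i \<le> v i \<and> v i \<le> b"
      and A2: "\<forall>i<n. \<forall>j<n. i \<noteq> j \<longrightarrow> v i \<le> u j \<or> v j \<le> u i"
      and A3: "(\<Sum>i<n. v i - u i) < min d1 d2"
    have "(\<Sum>i<n. \<bar>(f (v i) - g (v i)) - (f (u i) - g (u i))\<bar>) \<le>
          (\<Sum>i<n. \<bar>f (v i) - f (u i)\<bar> + \<bar>g (v i) - g (u i)\<bar>)"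
      by (rule sum_mono) linarith
    also have "\<dots> = (\<Sum>i<n. \<bar>f (v i) - f (u i)\<bar>) + (\<Sum>i<n. \<bar>g (v i) - g (u i)\<bar>)"
      by (simp add: sum.distrib)
    also have "\<dots> < e/2 + e/2"
      by (intro add_strict_mono H1 H2 A1 A2) (use A3 in auto)
    finally show "(\<Sum>i<n. \<bar>(f (v i) - g (v i)) - (f (u i) - g (u i))\<bar>) < e" by simp
  qed
qed

lemma ac_add:
  assumes "abs_cont_on a b f" "abs_cont_on a b g"
  shows "abs_cont_on a b (\<lambda>x. f x + g x)"
proof -
  have "abs_cont_on a b (\<lambda>x. 0 - g x)"
  proof (rule ac_diff[OF _ assms(2)])
    show "abs_cont_on a b (\<lambda>x. 0)" unfolding abs_cont_on_def by auto
  qed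
  from ac_diff[OF assms(1) this] show ?thesis by simp
qed

lemma ac_clamp:
  assumes "abs_cont_on a b F" "a \<le> s1" "s1 \<le> s2" "s2 \<le> b"
  shows "abs_cont_on a b (\<lambda>x. F (max s1 (min s2 x)))"
proof (rule ac_intro)
  fix e :: real assume e: "e > 0"
  obtain d where d: "d > 0" and H: "\<And>(n::nat) u v.
        (\<forall>i<n. a \<le> u i \<and> u i \<le> v i \<and> v i \<le> b) \<Longrightarrow>
        (\<forall>i<n. \<forall>j<n. i \<noteq> j \<longrightarrow> v i \<le> u j \<or> v j \<le> u i) \<Longrightarrow>
        (\<Sum>i<n. v i - u i) < d \<Longrightarrow> (\<Sum>i<n. \<bar>F (v i) - F (u i)\<bar>) < e"
    using ac_obtain[OF assms(1) e] by blast
  define p where "p = (\<lambda>x::real. max s1 (min s2 x))"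
  have pmono: "x \<le> y \<Longrightarrow> p x \<le> p y" for x y unfolding p_def by auto
  have plip: "x \<le> y \<Longrightarrow> p y - p x \<le> y - x" for x y unfolding p_def by auto
  have pin: "a \<le> p x \<and> p x \<le> b" for x unfolding p_def using assms by auto
  show "\<exists>d>0. \<forall>(n::nat) u v.
        (\<forall>i<n. a \<le> u i \<and> u i \<le> v i \<and> v i \<le> b) \<longrightarrow>
        (\<forall>i<n. \<forall>j<n. i \<noteq> j \<longrightarrow> v i \<le> u j \<or> v j \<le> u i) \<longrightarrow>
        (\<Sum>i<n. v i - u i) < d
        \<longrightarrow> (\<Sum>i<n. \<bar>F (max s1 (min s2 (v i))) - F (max s1 (min s2 (u i)))\<bar>) < e"
  proof (intro exI[of _ d] conjI allI impI)
    show "d > 0" by (rule d)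
    fix n :: nat and u v :: "nat \<Rightarrow> real"
    assume A1: "\<forall>i<n. a \<le> u i \<and> u i \<le> v i \<and> v i \<le> b"
      and A2: "\<forall>i<n. \<forall>j<n. i \<noteq> j \<longrightarrow> v i \<le> u j \<or> v j \<le> u i"
      and A3: "(\<Sum>i<n. v i - u i) < d"
    have S: "(\<Sum>i<n. (p \<circ> v) i - (p \<circ> u) i) \<le> (\<Sum>i<n. v i - u i)"
      by (rule sum_mono) (use A1 plip in auto)
    have c1: "\<forall>i<n. a \<le> (p \<circ> u) i \<and> (p \<circ> u) i \<le> (p \<circ> v) i \<and> (p \<circ> v) i \<le> b"
      using A1 pin pmono by (simp add: o_def)
    have c2: "\<forall>i<n. \<forall>j<n. i \<noteq> j \<longrightarrow> (p \<circ> v) i \<le> (p \<circ> u) j \<or> (p \<circ> v) j \<le> (p \<circ> u) i"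
    proof (intro allI impI)
      fix i j assume "i < n" "j < n" "i \<noteq> j"
      hence "v i \<le> u j \<or> v j \<le> u i" using A2 by blast
      thus "(p \<circ> v) i \<le> (p \<circ> u) j \<or> (p \<circ> v) j \<le> (p \<circ> u) i"
        using pmono by (auto simp: o_def)
    qed
    have "(\<Sum>i<n. \<bar>F ((p \<circ> v) i) - F ((p \<circ> u) i)\<bar>) < e"
      by (rule H[OF c1 c2]) (use S A3 in linarith)
    thus "(\<Sum>i<n. \<bar>F (max s1 (min s2 (v i))) - F (max s1 (min s2 (u i)))\<bar>) < e"
      by (simp add: p_def o_def)
  qed
qed

lemma ac_lipschitz:
  assumes "\<And>x y. x \<in> {a..b} \<Longrightarrow> y \<in> {a..b} \<Longrightarrow> \<bar>K x - K y\<bar> \<le> L * \<bar>x - y\<bar>"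
  shows "abs_cont_on a b K"
proof (rule ac_intro)
  fix e :: real assume e: "e > 0"
  define L' where "L' = \<bar>L\<bar> + 1"
  have L': "L' > 0" "L \<le> L'" unfolding L'_def by auto
  show "\<exists>d>0. \<forall>(n::nat) u v.
        (\<forall>i<n. a \<le> u i \<and> u i \<le> v i \<and> v i \<le> b) \<longrightarrow>
        (\<forall>i<n. \<forall>j<n. i \<noteq> j \<longrightarrow> v i \<le> u j \<or> v j \<le> u i) \<longrightarrow>
        (\<Sum>i<n. v i - u i) < d
        \<longrightarrow> (\<Sum>i<n. \<bar>K (v i) - K (u i)\<bar>) < e"
  proof (intro exI[of _ "e / L'"] conjI allI impI)
    show "e / L' > 0" using e L' by simp
    fix n :: nat and u v :: "nat \<Rightarrow> real"
    assume A1: "\<forall>i<n. a \<le> u i \<and> u i \<le> v i \<and> v i \<le> b"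
      and A3: "(\<Sum>i<n. v i - u i) < e / L'"
    have "(\<Sum>i<n. \<bar>K (v i) - K (u i)\<bar>) \<le> (\<Sum>i<n. L' * (v i - u i))"
    proof (rule sum_mono)
      fix i assume "i \<in> {..<n}"
      hence i: "a \<le> u i" "u i \<le> v i" "v i \<le> b" using A1 by auto
      have "\<bar>K (v i) - K (u i)\<bar> \<le> L * \<bar>v i - u i\<bar>" by (rule assms) (use i in auto)
      also have "\<dots> \<le> L' * (v i - u i)" using i L' by (auto intro: mult_right_mono)
      finally show "\<bar>K (v i) - K (u i)\<bar> \<le> L' * (v i - u i)" .
    qed
    also have "\<dots> = L' * (\<Sum>i<n. v i - u i)" by (simp add: sum_distrib_left)
    also have "\<dots> < L' * (e / L')" using A3 L' by (intro mult_strict_left_mono) auto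
    also have "\<dots> = e" using L' by simp
    finally show "(\<Sum>i<n. \<bar>K (v i) - K (u i)\<bar>) < e" .
  qed
qed



lemma concave_three_slope:
  fixes F :: "real \<Rightarrow> real"
  assumes "concave_on {a..b} F" "a \<le> w" "w < x" "x < y" "y \<le> b"
  shows "(F y - F x) / (y - x) \<le> (F x - F w) / (x - w)"
proof -
  have cv: "convex_on {a..b} (\<lambda>x. - F x)" using assms(1) by (simp add: concave_on_def)
  have 1: "((- F w) - (- F x)) / (w - x) \<le> ((- F w) - (- F y)) / (w - y)"
   and 2: "((- F w) - (- F y)) / (w - y) \<le> ((- F x) - (- F y)) / (x - y)"
    using convex_on_slope_le[OF cv, of w y x] assms by auto
  have e1: "((- F w) - (- F x)) / (w - x) = - ((F x - F w) / (x - w))"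
    using assms by (simp add: field_simps)
  have e2: "((- F x) - (- F y)) / (x - y) = - ((F y - F x) / (y - x))"
    using assms by (simp add: field_simps)
  show ?thesis using 1 2 e1 e2 by linarith
qed

lemma concave_right_deriv:
  fixes F :: "real \<Rightarrow> real"
  assumes "concave_on {a..b} F" "a < b"
  obtains R where "antimono_on {a<..<b} R"
    "\<And>x. x \<in> {a<..<b} \<Longrightarrow> isCont R x \<Longrightarrow> (F has_real_derivative R x) (at x)"
proof -
  define s where "s = (\<lambda>x y. (F y - F x) / (y - x))"
  have sym: "s x y = s y x" for x y unfolding s_def
    by (cases "x = y") (auto simp: field_simps)
  have three: "s x y \<le> s w x" if "a \<le> w" "w < x" "x < y" "y \<le> b" for w x y
    unfolding s_def by (rule concave_three_slope[OF assms(1) that])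
  define R where "R = (\<lambda>x. Sup ((\<lambda>y. s x y) ` {x<..b}))"
  have bdd: "bdd_above ((\<lambda>y. s x y) ` {x<..b})" if "x \<in> {a<..<b}" for x
    using that three[of a x] by (intro bdd_aboveI[where M="s a x"]) auto
  have R1: "s x y \<le> R x" if "x \<in> {a<..<b}" "y \<in> {x<..b}" for x y
    unfolding R_def by (rule cSup_upper) (use that bdd in auto)
  have R2: "R x \<le> s w x" if "x \<in> {a<..<b}" "a \<le> w" "w < x" for x w
    unfolding R_def by (rule cSup_least) (use that three in auto)
  have bnd: "\<bar>s x y - R x\<bar> \<le> \<bar>R y - R x\<bar>" if "x \<in> {a<..<b}" "y \<in> {a<..<b}" "y \<noteq> x" for x y
  proof (cases "x < y")
    case True
    have "R y \<le> s x y" using R2[of y x] that True by auto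
    moreover have "s x y \<le> R x" using R1[of x y] that True by auto
    ultimately show ?thesis by linarith
  next
    case False
    hence "y < x" using that by auto
    have "R x \<le> s y x" using R2[of x y] that \<open>y < x\<close> by auto
    moreover have "s y x \<le> R y" using R1[of y x] that \<open>y < x\<close> by auto
    ultimately show ?thesis using sym[of x y] by linarith
  qed
  show ?thesis
  proof (rule that)
    show "antimono_on {a<..<b} R"
      unfolding monotone_on_def
    proof (intro ballI impI)
      fix x y assume "x \<in> {a<..<b}" "y \<in> {a<..<b}" "x \<le> y"
      show "R y \<le> R x"
      proof (cases "x = y")
        case False
        hence "x < y" using \<open>x \<le> y\<close> by simp
        have "R y \<le> s x y" using R2[of y x] \<open>x \<in> _\<close> \<open>y \<in> _\<close> \<open>x < y\<close> by auto
        also have "s x y \<le> R x" using R1[of x y] \<open>x \<in> _\<close> \<open>y \<in> _\<close> \<open>x < y\<close> by auto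
        finally show ?thesis .
      qed simp
    qed
  next
    fix x assume x: "x \<in> {a<..<b}" and c: "isCont R x"
    have "((\<lambda>y. s x y) \<longlongrightarrow> R x) (at x)"
      unfolding tendsto_iff
    proof (intro allI impI)
      fix e :: real assume e: "e > 0"
      have ev1: "\<forall>\<^sub>F y in at x. dist (R y) (R x) < e"
        using c e unfolding isCont_def tendsto_iff by blast
      have ev2: "\<forall>\<^sub>F y in at x. y \<in> {a<..<b}"
        using x by (intro eventually_at_in_open') auto
      show "\<forall>\<^sub>F y in at x. dist (s x y) (R x) < e"
        using ev1 ev2 eventually_at_filter[of "\<lambda>y. y \<noteq> x" x UNIV]
      proof -
        have "\<forall>\<^sub>F y in at x. y \<noteq> x" by (simp add: eventually_at_filter)
        with ev1 ev2 show ?thesis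
        proof (eventually_elim)
          case (elim y)
          thus ?case using bnd[OF x, of y] by (simp add: dist_real_def)
        qed
      qed
    qed
    thus "(F has_real_derivative R x) (at x)"
      unfolding has_field_derivative_iff s_def .
  qed
qed



lemma antimono_countable_discont:
  fixes f :: "real \<Rightarrow> real"
  assumes "open A" "antimono_on A f"
  shows "countable {x\<in>A. \<not> isCont f x}"
proof -
  have "mono_on A (\<lambda>x. - f x)" using assms(2) unfolding monotone_on_def by auto
  from mono_on_ctble_discont_open[OF assms(1) this]
  have c: "countable {x\<in>A. \<not> isCont (\<lambda>x. - f x) x}" .
  have "{x\<in>A. \<not> isCont f x} \<subseteq> {x\<in>A. \<not> isCont (\<lambda>x. - f x) x}"
  proof safe
    fix x assume "x \<in> A" "\<not> isCont f x" "isCont (\<lambda>x. - f x) x"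
    from isCont_minus[OF \<open>isCont (\<lambda>x. - f x) x\<close>] show False using \<open>\<not> isCont f x\<close> by simp
  qed
  thus ?thesis using c countable_subset by blast
qed

lemma ftc_real:
  fixes G g :: "real \<Rightarrow> real"
  assumes "a \<le> b" "\<And>x. x \<in> {a..b} \<Longrightarrow> (G has_real_derivative g x) (at x)"
  shows "(g has_integral (G b - G a)) {a..b}"
proof -
  have "(g has_integral (G b - G a)) {a..b}"
    by (rule fundamental_theorem_of_calculus[OF assms(1)])
       (use assms(2) in \<open>auto simp: has_real_derivative_iff_has_vector_derivative[symmetric]
           intro: has_field_derivative_at_within\<close>)
  thus ?thesis .
qed



theorem lemma13:
  fixes t1 x1 t2 x2 b s1 s2 :: real and F \<rho> :: "real \<Rightarrow> real"
  assumes "0 < t1" and "t1 < t2" and "x1 / t1 > x2 / t2"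
    and "0 \<le> b" and "b \<le> (x2 - x1)\<^sup>2 / (t2 - t1) + x1\<^sup>2 / t1 - x2\<^sup>2 / t2"
    and "feasible t1 x1 t2 x2 b F \<rho>"
    and "\<forall>G \<sigma>. feasible t1 x1 t2 x2 b G \<sigma> \<longrightarrow> I2 t1 t2 \<rho> \<le> I2 t1 t2 \<sigma>"
    and "concave_on {t1..t2} F"
    and "\<forall>t\<in>{t1..t2}. \<forall>D. (F has_real_derivative D) (at t within {t1..t2}) \<longrightarrow> D \<le> F t / t"
    and "antimono_on {t1..t2} \<rho>"
    and "t1 \<le> s1" and "s1 \<le> s2" and "s2 \<le> t2"
    and "\<forall>t\<in>{s1..s2}. gfun t1 F \<rho> b t = 0"
  shows "\<exists>c1 c2. (\<forall>t\<in>{s1..s2}. F t = c1 * sqrt t + c2 * t) \<and>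
                (\<forall>t\<in>{s1<..<s2}. \<rho> t = (F t / t - deriv F t)\<^sup>2)"
proof (cases "s1 = s2")
  case True
  show ?thesis
    by (rule exI[of _ 0], rule exI[of _ "F s1 / s1"]) (use True assms(1,11) in auto)
next
  case False
  hence s12: "s1 < s2" using assms(12) by simp
  have s1pos: "s1 > 0" using assms(1,11) by simp
  note feas = assms(6)[unfolded feasible_def]
  have acF: "abs_cont_on t1 t2 F" and Ft1: "F t1 = x1" and Ft2: "F t2 = x2"
    and rho_meas: "\<rho> \<in> borel_measurable (lebesgue_on {t1..t2})"
    and rho_nn: "\<And>t. t \<in> {t1..t2} \<Longrightarrow> 0 \<le> \<rho> t"
    and absint: "(\<lambda>\<tau>. \<rho> \<tau> - (deriv F \<tau>)\<^sup>2) absolutely_integrable_on {t1..t2}"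
    and gF: "\<And>t. t \<in> {t1..t2} \<Longrightarrow> gfun t1 F \<rho> b t \<ge> 0"
    using feas by auto
  have contF: "continuous_on {t1..t2} F" by (rule ac_continuous[OF acF])
  have rho_anti: "\<And>u v. u \<in> {t1..t2} \<Longrightarrow> v \<in> {t1..t2} \<Longrightarrow> u \<le> v \<Longrightarrow> \<rho> v \<le> \<rho> u"
    using assms(10) unfolding monotone_on_def by auto
  obtain R where Ranti: "antimono_on {t1<..<t2} R"
    and Rder: "\<And>x. x \<in> {t1<..<t2} \<Longrightarrow> isCont R x \<Longrightarrow> (F has_real_derivative R x) (at x)"
    using concave_right_deriv[OF assms(8) assms(2)] by blast
  define C where "C = {x \<in> {t1<..<t2}. \<not> isCont R x} \<union> {x \<in> {t1<..<t2}. \<not> isCont \<rho> x}"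
  have rho_anti_open: "antimono_on {t1<..<t2} \<rho>"
    using assms(10) unfolding monotone_on_def by auto
  have cC: "countable C" unfolding C_def
    using antimono_countable_discont[OF _ Ranti] antimono_countable_discont[OF _ rho_anti_open] by auto
  have good: "t1 < x \<and> x < t2 \<and> isCont R x \<and> isCont \<rho> x"
    if "x \<in> {s1<..<s2} - C" for x
    using that assms(11,13) unfolding C_def by auto
  have DF: "(F has_real_derivative R x) (at x)" if "x \<in> {s1<..<s2} - C" for x
    using Rder good[OF that] by auto
  have dF: "deriv F x = R x" if "x \<in> {t1<..<t2}" "isCont R x" for x
    using Rder[OF that] by (rule DERIV_imp_deriv)
  have Rle: "R x \<le> F x / x" if "x \<in> {s1<..<s2} - C" for x
    using assms(9) good[OF that] has_field_derivative_at_within[OF DF[OF that], of "{t1..t2}"] by auto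

  have int_abs: "(\<lambda>\<tau>. \<rho> \<tau> - (deriv F \<tau>)\<^sup>2) integrable_on {t1..t2}"
    using absint absolutely_integrable_on_def by blast
  define f where "f = (\<lambda>\<tau>. \<rho> \<tau> - (R \<tau>)\<^sup>2)"
  define S where "S = C \<union> {t1, t2}"
  have negS: "negligible S" unfolding S_def using cC by (intro countable_negligible) auto
  have eqS: "f \<tau> = \<rho> \<tau> - (deriv F \<tau>)\<^sup>2" if "\<tau> \<in> {t1..t2} - S" for \<tau>
  proof -
    have "\<tau> \<in> {t1<..<t2}" "isCont R \<tau>" using that unfolding S_def C_def by auto
    thus ?thesis unfolding f_def using dF by simp
  qed
  have f_int: "f integrable_on {t1..t2}"
    by (rule integrable_spike[OF int_abs negS]) (use eqS in auto)
  have int_eq: "integral {t1..t} (\<lambda>\<tau>. \<rho> \<tau> - (deriv F \<tau>)\<^sup>2) = integral {t1..t} f"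
    if "t \<in> {t1..t2}" for t
    by (rule integral_spike[OF negS]) (use eqS that in auto)
  have Kf: "integral {t1..t} f = (F t1)\<^sup>2 / t1 - b - (F t)\<^sup>2 / t" if "t \<in> {s1<..<s2}" for t
  proof -
    have "t \<in> {t1..t2}" "t \<in> {s1..s2}" using that assms(11,13) by auto
    hence "b - (F t1)\<^sup>2 / t1 + integral {t1..t} (\<lambda>\<tau>. \<rho> \<tau> - (deriv F \<tau>)\<^sup>2) + (F t)\<^sup>2 / t = 0"
      using assms(14) unfolding gfun_def by auto
    thus ?thesis using int_eq[OF \<open>t \<in> {t1..t2}\<close>] by simp
  qed
  have rho_eq: "\<rho> x = (F x / x - R x)\<^sup>2" if x: "x \<in> {s1<..<s2} - C" for x
  proof -
    have xpos: "x > 0" using x s1pos by auto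
    have KD: "((\<lambda>t. (F t1)\<^sup>2 / t1 - b - (F t)\<^sup>2 / t) has_real_derivative
              - (2 * F x * R x / x - (F x)\<^sup>2 / x\<^sup>2)) (at x)"
      using xpos by (auto intro!: derivative_eq_intros DF[OF x] simp: field_simps power2_eq_square)
    have "f x = - (2 * F x * R x / x - (F x)\<^sup>2 / x\<^sup>2)"
    proof (rule deriv_from_integral[OF f_int _ _ _ _ _ Kf KD])
      show "isCont f x" unfolding f_def using good[OF x] by (intro continuous_intros) auto
    qed (use good[OF x] x in auto)
    thus ?thesis unfolding f_def using xpos by (simp add: field_simps power2_eq_square)
  qed
  have sqrt_eq: "sqrt (\<rho> x) = F x / x - R x" if x: "x \<in> {s1<..<s2} - C" for x
    using rho_eq[OF x] Rle[OF x] by simp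
  define g where "g = (\<lambda>\<tau>. sqrt (\<rho> \<tau>) / \<tau>)"
  have g_anti: "antimono_on {t1..t2} g"
    unfolding monotone_on_def g_def
  proof (intro ballI impI)
    fix u v assume uv: "u \<in> {t1..t2}" "v \<in> {t1..t2}" "u \<le> v"
    show "sqrt (\<rho> v) / v \<le> sqrt (\<rho> u) / u"
      by (rule frac_le) (use uv rho_nn rho_anti assms(1) in auto)
  qed
  have g_int: "g integrable_on {t1..t2}" by (rule antimono_integrable[OF g_anti])
  have g_nn: "0 \<le> g \<tau>" if "\<tau> \<in> {t1..t2}" for \<tau>
    unfolding g_def using that assms(1) rho_nn[OF that] by auto
  have ftc_h: "integral {s1..t} g = F s1 / s1 - F t / t" if t: "t \<in> {s1..s2}" for t
  proof -
    have "integral {s1..t} g = (\<lambda>\<tau>. - (F \<tau> / \<tau>)) t - (\<lambda>\<tau>. - (F \<tau> / \<tau>)) s1"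
    proof (rule ftc_countable[OF _ _ _ cC])
      show "s1 \<le> t" using t by simp
      show "g integrable_on {s1..t}"
        by (rule integrable_subinterval_real[OF g_int]) (use t assms(11,13) in auto)
      have "continuous_on {s1..t} F"
        by (rule continuous_on_subset[OF contF]) (use t assms(11,13) in auto)
      thus "continuous_on {s1..t} (\<lambda>\<tau>. - (F \<tau> / \<tau>))"
        using s1pos by (auto intro!: continuous_intros)
    next
      fix x assume "x \<in> {s1<..<t} - C"
      hence x: "x \<in> {s1<..<s2} - C" using t by auto
      have xpos: "x > 0" using x s1pos by auto
      have "((\<lambda>\<tau>. - (F \<tau> / \<tau>)) has_real_derivative - ((R x * x - F x * 1) / (x * x))) (at x)"
        using xpos by (auto intro!: derivative_eq_intros DF[OF x])
      moreover have "- ((R x * x - F x * 1) / (x * x)) = g x"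
        unfolding g_def sqrt_eq[OF x] using xpos by (simp add: field_simps)
      moreover have "isCont g x" unfolding g_def using good[OF x] xpos
        by (intro continuous_intros) auto
      ultimately show "((\<lambda>\<tau>. - (F \<tau> / \<tau>)) has_real_derivative g x) (at x) \<and> isCont g x" by simp
    qed
    thus ?thesis by simp
  qed

  define \<Delta> where "\<Delta> = F s1 / s1 - F s2 / s2"
  have \<Delta>_int: "integral {s1..s2} g = \<Delta>" using ftc_h[of s2] s12 by (simp add: \<Delta>_def)
  have \<Delta>nn: "\<Delta> \<ge> 0"
  proof -
    have "0 \<le> integral {s1..s2} g"
      by (rule integral_nonneg[OF integrable_subinterval_real[OF g_int]])
         (use g_nn assms(11,13) in auto)
    thus ?thesis using \<Delta>_int by simp
  qed
  define k where "k = 1 / sqrt s1 - 1 / sqrt s2"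
  have kpos: "k > 0"
  proof -
    have "sqrt s1 < sqrt s2" using s12 by simp
    hence "1 / sqrt s2 < 1 / sqrt s1" using s1pos by (intro divide_strict_left_mono) auto
    thus ?thesis unfolding k_def by simp
  qed
  define c1 where "c1 = \<Delta> / k"
  define c2 where "c2 = F s1 / s1 - c1 / sqrt s1"
  define aa where "aa = (\<lambda>\<tau>::real. c1 / (2 * sqrt \<tau>))"
  have c1nn: "c1 \<ge> 0" unfolding c1_def using \<Delta>nn kpos by simp
  have c1k: "c1 / sqrt s1 - c1 / sqrt s2 = \<Delta>"
  proof -
    have "c1 / sqrt s1 - c1 / sqrt s2 = c1 * k" by (simp add: k_def algebra_simps)
    also have "\<dots> = \<Delta>" using kpos by (simp add: c1_def)
    finally show ?thesis .
  qed
  have aa_nn: "aa \<tau> \<ge> 0" if "\<tau> \<ge> 0" for \<tau> unfolding aa_def using c1nn that by simp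
  have aa_der: "((\<lambda>\<tau>. - c1 / sqrt \<tau>) has_real_derivative aa x / x) (at x)" if "x > 0" for x
    unfolding aa_def using that by (auto intro!: derivative_eq_intros simp: field_simps)
  have ftc_a: "((\<lambda>\<tau>. aa \<tau> / \<tau>) has_integral (c1 / sqrt s1 - c1 / sqrt t)) {s1..t}"
    if t: "t \<in> {s1..s2}" for t
    using ftc_real[of s1 t "\<lambda>\<tau>. - c1 / sqrt \<tau>" "\<lambda>\<tau>. aa \<tau> / \<tau>"] aa_der t s1pos by auto

  have rp_anti: "antimono_on {t1..t2} (\<lambda>\<tau>. \<rho> \<tau> powr (3/2))"
    unfolding monotone_on_def using rho_anti rho_nn by (auto intro: powr_mono2)
  have rp_int: "(\<lambda>\<tau>. \<rho> \<tau> powr (3/2)) integrable_on {s1..s2}"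
    by (rule integrable_subinterval_real[OF antimono_integrable[OF rp_anti]]) (use assms(11,13) in auto)
  have aa_cont: "continuous_on {s1..s2} aa"
    unfolding aa_def using s1pos by (auto intro!: continuous_intros)
  have a3_int: "(\<lambda>\<tau>. (aa \<tau>)^3) integrable_on {s1..s2}"
    by (rule integrable_continuous_real) (use aa_cont in \<open>auto intro!: continuous_intros\<close>)
  define HH where "HH = (\<lambda>t. c1 * sqrt t + c2 * t)"
  define Hd where "Hd = (\<lambda>t. c1 / (2 * sqrt t) + c2)"
  have HH_der: "(HH has_real_derivative Hd x) (at x)" if "x > 0" for x
    unfolding HH_def Hd_def using that by (auto intro!: derivative_eq_intros simp: field_simps)
  have HHs1: "HH s1 = F s1"
  proof -
    have e: "c1 / sqrt s1 * s1 = c1 * (s1 / sqrt s1)" by simp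
    have "HH s1 = c1 * sqrt s1 + (F s1 / s1) * s1 - c1 / sqrt s1 * s1"
      unfolding HH_def c2_def by (simp add: algebra_simps)
    also have "\<dots> = c1 * sqrt s1 + (F s1 / s1) * s1 - c1 * sqrt s1"
      unfolding e using s1pos by (simp add: real_div_sqrt)
    finally show ?thesis using s1pos by simp
  qed
  have HHs2: "HH s2 = F s2"
  proof -
    have s2pos: "s2 > 0" using s12 s1pos by simp
    have "F s2 / s2 = c2 + c1 / sqrt s2" using c1k unfolding \<Delta>_def c2_def by simp
    hence "F s2 = s2 * c2 + c1 * (s2 / sqrt s2)" using s2pos by (simp add: field_simps)
    thus ?thesis unfolding HH_def using s2pos by (simp add: real_div_sqrt)
  qed
  have aa_HH: "aa t = HH t / t - Hd t" if "t > 0" for t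
  proof -
    have "HH t / t = c1 * (sqrt t / t) + c2" unfolding HH_def using that by (simp add: field_simps)
    also have "sqrt t / t = 1 / sqrt t" using that
      by (simp add: field_simps)
    finally show ?thesis unfolding aa_def Hd_def by (simp add: field_simps)
  qed
  define p where "p = (\<lambda>\<tau>::real. max s1 (min s2 \<tau>))"
  define G where "G = (\<lambda>\<tau>. F \<tau> - F (p \<tau>) + HH (p \<tau>))"
  define \<sigma> where "\<sigma> = (\<lambda>\<tau>. if \<tau> \<in> {s1..s2} then (aa \<tau>)\<^sup>2 else \<rho> \<tau>)"
  have G_lo: "G \<tau> = F \<tau>" if "\<tau> \<le> s1" for \<tau>
  proof -
    have "p \<tau> = s1" unfolding p_def using that assms(12) by auto
    thus ?thesis unfolding G_def using HHs1 by simp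
  qed
  have G_hi: "G \<tau> = F \<tau>" if "\<tau> \<ge> s2" for \<tau>
  proof -
    have "p \<tau> = s2" unfolding p_def using that assms(12) by auto
    thus ?thesis unfolding G_def using HHs2 by simp
  qed
  have G_in: "G \<tau> = HH \<tau>" if "\<tau> \<in> {s1..s2}" for \<tau>
  proof -
    have "p \<tau> = \<tau>" unfolding p_def using that by auto
    thus ?thesis unfolding G_def by simp
  qed
  have dG_lo: "deriv G \<tau> = deriv F \<tau>" if "\<tau> < s1" for \<tau>
  proof (rule deriv_cong_ev)
    have "\<forall>\<^sub>F y in nhds \<tau>. y \<in> {..<s1}" by (rule eventually_nhds_in_open) (use that in auto)
    thus "\<forall>\<^sub>F y in nhds \<tau>. G y = F y" by eventually_elim (use G_lo in auto)
  qed simp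
  have dG_hi: "deriv G \<tau> = deriv F \<tau>" if "\<tau> > s2" for \<tau>
  proof (rule deriv_cong_ev)
    have "\<forall>\<^sub>F y in nhds \<tau>. y \<in> {s2<..}" by (rule eventually_nhds_in_open) (use that in auto)
    thus "\<forall>\<^sub>F y in nhds \<tau>. G y = F y" by eventually_elim (use G_hi in auto)
  qed simp
  have dG_in: "deriv G \<tau> = Hd \<tau>" if "\<tau> \<in> {s1<..<s2}" for \<tau>
  proof -
    have "deriv G \<tau> = deriv HH \<tau>"
    proof (rule deriv_cong_ev)
      have "\<forall>\<^sub>F y in nhds \<tau>. y \<in> {s1<..<s2}" by (rule eventually_nhds_in_open) (use that in auto)
      thus "\<forall>\<^sub>F y in nhds \<tau>. G y = HH y" by eventually_elim (use G_in in auto)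
    qed simp
    also have "\<dots> = Hd \<tau>" by (rule DERIV_imp_deriv[OF HH_der]) (use that s1pos in auto)
    finally show ?thesis .
  qed
  define qF where "qF = (\<lambda>\<tau>. \<rho> \<tau> - (deriv F \<tau>)\<^sup>2)"
  define q where "q = (\<lambda>\<tau>. \<sigma> \<tau> - (deriv G \<tau>)\<^sup>2)"
  define pf where "pf = (\<lambda>\<tau>. (aa \<tau>)\<^sup>2 - (Hd \<tau>)\<^sup>2)"
  have q_out: "q \<tau> = qF \<tau>" if "\<tau> < s1 \<or> \<tau> > s2" for \<tau>
    unfolding q_def qF_def \<sigma>_def using that dG_lo dG_hi by auto
  have q_in: "q \<tau> = pf \<tau>" if "\<tau> \<in> {s1<..<s2}" for \<tau>
    unfolding q_def pf_def \<sigma>_def using that dG_in by auto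
  have pf_cont: "continuous_on {s1..s2} pf"
    unfolding pf_def aa_def Hd_def using s1pos by (auto intro!: continuous_intros)
  have pf_ftc: "(pf has_integral ((HH u)\<^sup>2 / u - (HH v)\<^sup>2 / v)) {u..v}"
    if "s1 \<le> u" "u \<le> v" "v \<le> s2" for u v
  proof -
    have "(pf has_integral ((\<lambda>\<tau>. - ((HH \<tau>)\<^sup>2 / \<tau>)) v - (\<lambda>\<tau>. - ((HH \<tau>)\<^sup>2 / \<tau>)) u)) {u..v}"
    proof (rule ftc_real[OF that(2)])
      fix x assume "x \<in> {u..v}"
      hence xpos: "x > 0" using that s1pos by auto
      have "((\<lambda>\<tau>. - ((HH \<tau>)\<^sup>2 / \<tau>)) has_real_derivative
              - ((2 * HH x * Hd x * x - (HH x)\<^sup>2 * 1) / (x * x))) (at x)"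
        using xpos by (auto intro!: derivative_eq_intros HH_der simp: power2_eq_square)
      moreover have "- ((2 * HH x * Hd x * x - (HH x)\<^sup>2 * 1) / (x * x)) = pf x"
        unfolding pf_def aa_HH[OF xpos] using xpos by (simp add: field_simps power2_eq_square)
      ultimately show "((\<lambda>\<tau>. - ((HH \<tau>)\<^sup>2 / \<tau>)) has_real_derivative pf x) (at x)" by simp
    qed
    thus ?thesis by simp
  qed
  have qF_abs: "qF absolutely_integrable_on {t1..t2}" using absint unfolding qF_def .
  have qF_int: "qF integrable_on {t1..t2}" using qF_abs absolutely_integrable_on_def by blast
  have q_abs: "q absolutely_integrable_on {t1..t2}"
  proof -
    have a1: "q absolutely_integrable_on {t1..s1}"
      by (rule absolutely_integrable_spike[OF absolutely_integrable_on_subinterval[OF qF_abs], of t1 s1 "{s1}"])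
         (use assms(11,12,13) q_out in auto)
    have a2: "q absolutely_integrable_on {s1..s2}"
      by (rule absolutely_integrable_spike[OF absolutely_integrable_continuous_real[OF pf_cont], of "{s1,s2}"])
         (use q_in in auto)
    have a3: "q absolutely_integrable_on {s2..t2}"
      by (rule absolutely_integrable_spike[OF absolutely_integrable_on_subinterval[OF qF_abs], of s2 t2 "{s2}"])
         (use assms(11,12,13) q_out in auto)
    have "q absolutely_integrable_on {t1..s2}"
      by (rule absolutely_integrable_on_combine[OF a1 a2]) (use assms in auto)
    thus ?thesis by (rule absolutely_integrable_on_combine[OF _ a3]) (use assms in auto)
  qed
  have q_int: "q integrable_on {t1..t2}" using q_abs absolutely_integrable_on_def by blast
  have gF0: "b - (F t1)\<^sup>2 / t1 + integral {t1..t} qF + (F t)\<^sup>2 / t = 0" if "t \<in> {s1..s2}" for t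
    using assms(14) that unfolding gfun_def qF_def by auto
  have Iq_lo: "integral {t1..t} q = integral {t1..t} qF" if "t1 \<le> t" "t \<le> s1" for t
    by (rule integral_spike[of "{s1}"]) (use that q_out in auto)
  have Iq_in: "integral {t1..t} q = integral {t1..s1} qF + ((HH s1)\<^sup>2 / s1 - (HH t)\<^sup>2 / t)"
    if "s1 \<le> t" "t \<le> s2" for t
  proof -
    have "integral {t1..t} q = integral {t1..s1} q + integral {s1..t} q"
      by (rule Henstock_Kurzweil_Integration.integral_combine[symmetric])
         (use that assms integrable_subinterval_real[OF q_int, of t1 t] in auto)
    moreover have "integral {s1..t} q = integral {s1..t} pf"
      by (rule integral_spike[of "{s1,t}"]) (use that q_in in auto)
    moreover have "integral {s1..t} pf = (HH s1)\<^sup>2 / s1 - (HH t)\<^sup>2 / t"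
      by (rule integral_unique[OF pf_ftc]) (use that in auto)
    ultimately show ?thesis using Iq_lo[of s1] assms(11) by simp
  qed
  have Iq_hi: "integral {t1..t} q = integral {t1..t} qF" if "s2 \<le> t" "t \<le> t2" for t
  proof -
    have "integral {t1..t} q = integral {t1..s2} q + integral {s2..t} q"
      by (rule Henstock_Kurzweil_Integration.integral_combine[symmetric])
         (use that assms integrable_subinterval_real[OF q_int, of t1 t] in auto)
    moreover have "integral {s2..t} q = integral {s2..t} qF"
      by (rule integral_spike[of "{s2}"]) (use that q_out in auto)
    moreover have "integral {t1..t} qF = integral {t1..s2} qF + integral {s2..t} qF"
      by (rule Henstock_Kurzweil_Integration.integral_combine[symmetric])
         (use that assms integrable_subinterval_real[OF qF_int, of t1 t] in auto)
    moreover have "integral {t1..s2} q = integral {t1..s2} qF"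
    proof -
      have "integral {t1..s2} q = integral {t1..s1} qF + ((HH s1)\<^sup>2 / s1 - (HH s2)\<^sup>2 / s2)"
        using Iq_in[of s2] assms(12) by simp
      moreover have "b - (F t1)\<^sup>2 / t1 + integral {t1..s1} qF + (F s1)\<^sup>2 / s1 = 0"
        using gF0[of s1] assms(12) by simp
      moreover have "b - (F t1)\<^sup>2 / t1 + integral {t1..s2} qF + (F s2)\<^sup>2 / s2 = 0"
        using gF0[of s2] assms(12) by simp
      ultimately show ?thesis using HHs1 HHs2 by simp
    qed
    ultimately show ?thesis by simp
  qed
  have feasG: "feasible t1 x1 t2 x2 b G \<sigma>"
    unfolding feasible_def
  proof (intro conjI ballI)
    show "abs_cont_on t1 t2 G"
    proof -
      have L: "\<bar>HH (p x) - HH (p y)\<bar> \<le> (c1 / (2 * sqrt s1) + \<bar>c2\<bar>) * \<bar>x - y\<bar>" for x y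
      proof -
        have px: "p x \<ge> s1" "p y \<ge> s1" unfolding p_def by auto
        have pd: "\<bar>p x - p y\<bar> \<le> \<bar>x - y\<bar>" unfolding p_def by auto
        have sq: "\<bar>sqrt (p x) - sqrt (p y)\<bar> \<le> \<bar>p x - p y\<bar> / (2 * sqrt s1)"
        proof -
          have "sqrt s1 \<le> sqrt (p x)" "sqrt s1 \<le> sqrt (p y)" using px by simp_all
          hence pos: "sqrt (p x) + sqrt (p y) \<ge> 2 * sqrt s1" by linarith
          have s1p: "sqrt s1 > 0" using s1pos by simp
          have E: "(sqrt (p x) - sqrt (p y)) * (sqrt (p x) + sqrt (p y)) = p x - p y"
            using px s1pos by (simp add: algebra_simps)
          hence "\<bar>sqrt (p x) - sqrt (p y)\<bar> * (sqrt (p x) + sqrt (p y)) = \<bar>p x - p y\<bar>"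
          proof -
            have "\<bar>p x - p y\<bar> = \<bar>sqrt (p x) - sqrt (p y)\<bar> * \<bar>sqrt (p x) + sqrt (p y)\<bar>"
              unfolding E[symmetric] by (rule abs_mult)
            moreover have "\<bar>sqrt (p x) + sqrt (p y)\<bar> = sqrt (p x) + sqrt (p y)"
              using pos s1p by (intro abs_of_nonneg) linarith
            ultimately show ?thesis by simp
          qed
          hence "\<bar>sqrt (p x) - sqrt (p y)\<bar> * (2 * sqrt s1) \<le> \<bar>p x - p y\<bar>"
            using mult_left_mono[OF pos abs_ge_zero[of "sqrt (p x) - sqrt (p y)"]] by linarith
          thus ?thesis using s1p by (simp add: field_simps)
        qed
        have "\<bar>HH (p x) - HH (p y)\<bar> = \<bar>c1 * (sqrt (p x) - sqrt (p y)) + c2 * (p x - p y)\<bar>"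
          unfolding HH_def by (simp add: algebra_simps)
        also have "\<dots> \<le> c1 * \<bar>sqrt (p x) - sqrt (p y)\<bar> + \<bar>c2\<bar> * \<bar>p x - p y\<bar>"
          using c1nn by (simp add: abs_mult abs_triangle_ineq order_trans[OF abs_triangle_ineq])
        also have "\<dots> \<le> c1 * (\<bar>x - y\<bar> / (2 * sqrt s1)) + \<bar>c2\<bar> * \<bar>x - y\<bar>"
        proof (intro add_mono mult_left_mono)
          show "\<bar>sqrt (p x) - sqrt (p y)\<bar> \<le> \<bar>x - y\<bar> / (2 * sqrt s1)"
            using order_trans[OF sq divide_right_mono[OF pd]] s1pos by simp
        qed (use c1nn pd in auto)
        also have "\<dots> = (c1 / (2 * sqrt s1) + \<bar>c2\<bar>) * \<bar>x - y\<bar>" by (simp add: field_simps)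
        finally show ?thesis .
      qed
      have "abs_cont_on t1 t2 (\<lambda>x. F x - F (p x))"
        unfolding p_def by (rule ac_diff[OF acF ac_clamp[OF acF assms(11,12,13)]])
      moreover have "abs_cont_on t1 t2 (\<lambda>x. HH (p x))" by (rule ac_lipschitz[OF L])
      ultimately have "abs_cont_on t1 t2 (\<lambda>x. F x - F (p x) + HH (p x))" by (rule ac_add)
      thus ?thesis unfolding G_def .
    qed
    show "G t1 = x1" using G_lo[of t1] assms(11) Ft1 by simp
    show "G t2 = x2" using G_hi[of t2] assms(13) Ft2 by simp
    show "\<sigma> \<in> borel_measurable (lebesgue_on {t1..t2})"
      unfolding \<sigma>_def
    proof (rule measurable_If_set[OF _ rho_meas])
      have "(\<lambda>\<tau>. (aa \<tau>)\<^sup>2) \<in> borel_measurable lborel" unfolding aa_def by measurable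
      hence "(\<lambda>\<tau>. (aa \<tau>)\<^sup>2) \<in> borel_measurable lebesgue"
        by (rule measurable_completion)
      thus "(\<lambda>\<tau>. (aa \<tau>)\<^sup>2) \<in> borel_measurable (lebesgue_on {t1..t2})"
        by (rule measurable_restrict_space1)
      show "{s1..s2} \<inter> space (lebesgue_on {t1..t2}) \<in> sets (lebesgue_on {t1..t2})"
        by (simp add: sets_restrict_space_iff)
    qed
    show "0 \<le> \<sigma> t" if "t \<in> {t1..t2}" for t unfolding \<sigma>_def using rho_nn that by auto
    show "(\<lambda>\<tau>. \<sigma> \<tau> - (deriv G \<tau>)\<^sup>2) absolutely_integrable_on {t1..t2}"
      using q_abs unfolding q_def .
    fix t assume t: "t \<in> {t1..t2}"
    have G1: "G t1 = F t1" using G_lo[of t1] assms(11) by simp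
    have eqg: "gfun t1 G \<sigma> b t = b - (F t1)\<^sup>2 / t1 + integral {t1..t} q + (G t)\<^sup>2 / t"
      unfolding gfun_def q_def G1 ..
    show "0 \<le> gfun t1 G \<sigma> b t"
    proof (cases "t \<le> s1")
      case True
      thus ?thesis using gF[OF t] eqg Iq_lo[of t] G_lo[of t] t unfolding gfun_def qF_def by simp
    next
      case False
      show ?thesis
      proof (cases "t \<le> s2")
        case True
        have "gfun t1 G \<sigma> b t = b - (F t1)\<^sup>2 / t1 + integral {t1..s1} qF + (F s1)\<^sup>2 / s1"
          using eqg Iq_in[of t] G_in[of t] True False HHs1 by simp
        also have "\<dots> = 0" using gF0[of s1] assms(12) by simp
        finally show ?thesis by simp
      next
        case False
        thus ?thesis using gF[OF t] eqg Iq_hi[of t] G_hi[of t] t unfolding gfun_def qF_def by simp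
      qed
    qed
  qed
  have minimal: "integral {s1..s2} (\<lambda>\<tau>. \<rho> \<tau> powr (3/2)) \<le> integral {s1..s2} (\<lambda>\<tau>. (aa \<tau>)^3)"
  proof -
    have Imin: "I2 t1 t2 \<rho> \<le> I2 t1 t2 \<sigma>" using assms(7) feasG by blast
    define fr where "fr = (\<lambda>\<tau>. \<rho> \<tau> powr (3/2))"
    define fs where "fs = (\<lambda>\<tau>. \<sigma> \<tau> powr (3/2))"
    have p32: "x powr (3/2) = x * sqrt x" if "0 \<le> x" for x :: real
    proof -
      have "x powr (3/2) = x powr (1 + 1/2)" by simp
      also have "\<dots> = x * sqrt x" unfolding powr_add using that by (simp add: powr_half_sqrt)
      finally show ?thesis .
    qed
    have fr_int: "fr integrable_on {t1..t2}" unfolding fr_def by (rule antimono_integrable[OF rp_anti])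
    have fs_in: "fs \<tau> = (aa \<tau>)^3" if "\<tau> \<in> {s1..s2}" for \<tau>
    proof -
      have "aa \<tau> \<ge> 0" using aa_nn[of \<tau>] that s1pos by auto
      thus ?thesis unfolding fs_def \<sigma>_def using that p32[of "(aa \<tau>)\<^sup>2"]
        by (simp add: power3_eq_cube power2_eq_square)
    qed
    have fs_out: "fs \<tau> = fr \<tau>" if "\<tau> \<notin> {s1..s2}" for \<tau>
    unfolding fs_def fr_def \<sigma>_def using that by (simp only: if_False)
    have i1: "(fr has_integral integral {t1..s1} fr) {t1..s1}"
      using integrable_subinterval_real[OF fr_int, of t1 s1] assms by auto
    have i2: "(fr has_integral integral {s1..s2} fr) {s1..s2}"
      using integrable_subinterval_real[OF fr_int, of s1 s2] assms by auto
    have i3: "(fr has_integral integral {s2..t2} fr) {s2..t2}"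
      using integrable_subinterval_real[OF fr_int, of s2 t2] assms by auto
    have j1: "(fs has_integral integral {t1..s1} fr) {t1..s1}"
      by (rule has_integral_spike[OF _ _ i1, of "{s1}"]) (use fs_out in auto)
    have j2: "(fs has_integral integral {s1..s2} (\<lambda>\<tau>. (aa \<tau>)^3)) {s1..s2}"
      using a3_int fs_in by (subst has_integral_cong[of _ _ "\<lambda>\<tau>. (aa \<tau>)^3"]) auto
    have j3: "(fs has_integral integral {s2..t2} fr) {s2..t2}"
      by (rule has_integral_spike[OF _ _ i3, of "{s2}"]) (use fs_out in auto)
    have Ar: "(fr has_integral (integral {t1..s1} fr + integral {s1..s2} fr + integral {s2..t2} fr)) {t1..t2}"
      by (rule has_integral_combine[OF _ _ has_integral_combine[OF _ _ i1 i2] i3]) (use assms in auto)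
    have As: "(fs has_integral (integral {t1..s1} fr + integral {s1..s2} (\<lambda>\<tau>. (aa \<tau>)^3) + integral {s2..t2} fr)) {t1..t2}"
      by (rule has_integral_combine[OF _ _ has_integral_combine[OF _ _ j1 j2] j3]) (use assms in auto)
    have nnr: "\<And>x. x \<in> {t1..t2} \<Longrightarrow> 0 \<le> fr x" unfolding fr_def by simp
    have nns: "\<And>x. x \<in> {t1..t2} \<Longrightarrow> 0 \<le> fs x" unfolding fs_def by simp
    have Er: "(\<integral>\<^sup>+ t. indicator {t1..t2} t * ennreal (\<rho> t powr (3/2)) \<partial>lborel)
        = ennreal (integral {t1..s1} fr + integral {s1..s2} fr + integral {s2..t2} fr)"
    proof -
      have "(\<lambda>t. indicator {t1..t2} t * ennreal (\<rho> t powr (3/2))) = (\<lambda>x. ennreal (fr x) * indicator {t1..t2} x)"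
        unfolding fr_def by (auto simp: mult.commute)
      thus ?thesis using nn_integral_has_integral_lebesgue'[OF nnr Ar] by simp
    qed
    have Es: "(\<integral>\<^sup>+ t. indicator {t1..t2} t * ennreal (\<sigma> t powr (3/2)) \<partial>lborel)
        = ennreal (integral {t1..s1} fr + integral {s1..s2} (\<lambda>\<tau>. (aa \<tau>)^3) + integral {s2..t2} fr)"
    proof -
      have "(\<lambda>t. indicator {t1..t2} t * ennreal (\<sigma> t powr (3/2))) = (\<lambda>x. ennreal (fs x) * indicator {t1..t2} x)"
        unfolding fs_def by (auto simp: mult.commute)
      thus ?thesis using nn_integral_has_integral_lebesgue'[OF nns As] by simp
    qed
    have "ennreal (integral {t1..s1} fr + integral {s1..s2} fr + integral {s2..t2} fr)
        \<le> ennreal (integral {t1..s1} fr + integral {s1..s2} (\<lambda>\<tau>. (aa \<tau>)^3) + integral {s2..t2} fr)"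
      using Imin unfolding I2_def Er Es by (subst (asm) ennreal_mult_le_mult_iff) auto
    moreover have "0 \<le> integral {t1..s1} fr + integral {s1..s2} (\<lambda>\<tau>. (aa \<tau>)^3) + integral {s2..t2} fr"
      using has_integral_nonneg[OF As nns] by simp
    ultimately have "integral {t1..s1} fr + integral {s1..s2} fr + integral {s2..t2} fr
        \<le> integral {t1..s1} fr + integral {s1..s2} (\<lambda>\<tau>. (aa \<tau>)^3) + integral {s2..t2} fr"
      by (simp add: ennreal_le_iff)
    thus ?thesis unfolding fr_def by simp
  qed

  define y where "y = (\<lambda>\<tau>. sqrt (\<rho> \<tau>))"
  define \<phi> where "\<phi> = (\<lambda>\<tau>. (y \<tau> - aa \<tau>)\<^sup>2 * (y \<tau> + 2 * aa \<tau>))"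
  have powr_eq: "\<rho> \<tau> powr (3/2) = (y \<tau>)^3" if "\<tau> \<in> {t1..t2}" for \<tau>
  proof -
    have "\<rho> \<tau> powr (3/2) = \<rho> \<tau> powr (1 + 1/2)" by simp
    also have "\<dots> = \<rho> \<tau> * sqrt (\<rho> \<tau>)"
      unfolding powr_add using rho_nn[OF that] by (simp add: powr_half_sqrt)
    also have "\<dots> = (y \<tau>)^3" unfolding y_def using rho_nn[OF that]
      by (simp add: power3_eq_cube)
    finally show ?thesis .
  qed
  have phi_id: "\<phi> \<tau> = \<rho> \<tau> powr (3/2) - (aa \<tau>)^3 - (3 * c1\<^sup>2 / 4) * (g \<tau> - aa \<tau> / \<tau>)"
    if "\<tau> \<in> {s1..s2}" for \<tau>
  proof -
    have tpos: "\<tau> > 0" using that s1pos by auto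
    have t12: "\<tau> \<in> {t1..t2}" using that assms(11,13) by auto
    have a2: "(aa \<tau>)\<^sup>2 = c1\<^sup>2 / (4 * \<tau>)" unfolding aa_def using tpos
      by (simp add: power_divide power_mult_distrib)
    have gy: "g \<tau> = y \<tau> / \<tau>" unfolding g_def y_def by simp
    have "\<phi> \<tau> = (y \<tau>)^3 - (aa \<tau>)^3 - 3 * (aa \<tau>)\<^sup>2 * (y \<tau> - aa \<tau>)"
      unfolding \<phi>_def by (simp add: power2_eq_square power3_eq_cube algebra_simps)
    also have "3 * (aa \<tau>)\<^sup>2 * (y \<tau> - aa \<tau>) = (3 * c1\<^sup>2 / 4) * (g \<tau> - aa \<tau> / \<tau>)"
      unfolding a2 gy using tpos by (simp add: field_simps)
    finally show ?thesis using powr_eq[OF t12] by simp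
  qed
  have gs_int: "g integrable_on {s1..s2}"
    by (rule integrable_subinterval_real[OF g_int]) (use assms(11,13) in auto)
  have phi_has: "(\<phi> has_integral (integral {s1..s2} (\<lambda>\<tau>. \<rho> \<tau> powr (3/2)) - integral {s1..s2} (\<lambda>\<tau>. (aa \<tau>)^3)
        - (3 * c1\<^sup>2 / 4) * (\<Delta> - (c1 / sqrt s1 - c1 / sqrt s2)))) {s1..s2}"
  proof -
    have "((\<lambda>\<tau>. \<rho> \<tau> powr (3/2) - (aa \<tau>)^3 - (3 * c1\<^sup>2 / 4) * (g \<tau> - aa \<tau> / \<tau>)) has_integral
        (integral {s1..s2} (\<lambda>\<tau>. \<rho> \<tau> powr (3/2)) - integral {s1..s2} (\<lambda>\<tau>. (aa \<tau>)^3)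
        - (3 * c1\<^sup>2 / 4) * (\<Delta> - (c1 / sqrt s1 - c1 / sqrt s2)))) {s1..s2}"
      by (intro has_integral_diff has_integral_mult_right integrable_integral rp_int a3_int
          ftc_a[of s2, simplified] ) (use \<Delta>_int gs_int s12 in \<open>auto simp: has_integral_integrable_integral\<close>)
    thus ?thesis using phi_id by (subst has_integral_cong) auto
  qed
  have phi_nn: "\<phi> \<tau> \<ge> 0" if "\<tau> \<in> {s1..s2}" for \<tau>
  proof -
    have "0 \<le> aa \<tau>" "0 \<le> sqrt (\<rho> \<tau>)" using aa_nn[of \<tau>] that s1pos rho_nn[of \<tau>] assms(11,13) by auto
    thus ?thesis unfolding \<phi>_def y_def by (intro mult_nonneg_nonneg) auto
  qed
  have phi_int: "\<phi> integrable_on {s1..s2}" using phi_has by blast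
  have phi_zero: "integral {s1..s2} \<phi> = 0"
  proof -
    have "integral {s1..s2} \<phi> \<le> 0" using phi_has minimal c1k by (simp add: integral_unique)
    moreover have "integral {s1..s2} \<phi> \<ge> 0" by (rule integral_nonneg[OF phi_int phi_nn])
    ultimately show ?thesis by simp
  qed
  have phi_zero_t: "integral {s1..t} \<phi> = 0" if t: "t \<in> {s1<..<s2}" for t
  proof -
    have "integral {s1..t} \<phi> + integral {t..s2} \<phi> = integral {s1..s2} \<phi>"
      by (rule Henstock_Kurzweil_Integration.integral_combine) (use t phi_int in auto)
    moreover have "integral {s1..t} \<phi> \<ge> 0"
      by (rule integral_nonneg[OF integrable_subinterval_real[OF phi_int]]) (use t phi_nn in auto)
    moreover have "integral {t..s2} \<phi> \<ge> 0"
      by (rule integral_nonneg[OF integrable_subinterval_real[OF phi_int]]) (use t phi_nn in auto)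
    ultimately show ?thesis using phi_zero by linarith
  qed
  have y_eq: "y x = aa x" if x: "x \<in> {s1<..<s2} - C" for x
  proof -
    have xpos: "x > 0" using x s1pos by auto
    have "\<phi> x = 0"
    proof (rule deriv_from_integral[OF phi_int _ _ _ _ _ phi_zero_t])
      show "isCont \<phi> x" unfolding \<phi>_def y_def aa_def using good[OF x] xpos
        by (intro continuous_intros) auto
    qed (use x in \<open>auto intro: derivative_eq_intros\<close>)
    hence "(y x - aa x)\<^sup>2 = 0 \<or> y x + 2 * aa x = 0" unfolding \<phi>_def by simp
    moreover have "0 \<le> y x" unfolding y_def using rho_nn[of x] good[OF x] by auto
    moreover have "0 \<le> aa x" using aa_nn[of x] xpos by auto
    ultimately show ?thesis by auto
  qed

  have F_eq: "F t = c1 * sqrt t + c2 * t" if t: "t \<in> {s1..s2}" for t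
  proof -
    have tpos: "t > 0" using t s1pos by auto
    have negS': "negligible (C \<union> {s1, t})" using cC by (intro countable_negligible) auto
    have "integral {s1..t} g = integral {s1..t} (\<lambda>\<tau>. aa \<tau> / \<tau>)"
    proof (rule integral_spike[OF negS'])
      fix \<tau> assume "\<tau> \<in> {s1..t} - (C \<union> {s1, t})"
      hence "\<tau> \<in> {s1<..<s2} - C" using t by auto
      thus "aa \<tau> / \<tau> = g \<tau>" using y_eq unfolding g_def y_def by simp
    qed
    hence "F s1 / s1 - F t / t = c1 / sqrt s1 - c1 / sqrt t"
      using ftc_h[OF t] integral_unique[OF ftc_a[OF t]] by simp
    hence "F t / t = c2 + c1 / sqrt t" unfolding c2_def by simp
    hence "F t = t * (c2 + c1 / sqrt t)" using tpos by (simp add: field_simps)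
    also have "\<dots> = c1 * (t / sqrt t) + c2 * t" by (simp add: algebra_simps)
    also have "t / sqrt t = sqrt t" using tpos by (simp add: real_div_sqrt)
    finally show ?thesis .
  qed

  have rho_aa: "\<rho> \<tau> = (aa \<tau>)\<^sup>2" if "\<tau> \<in> {s1<..<s2} - C" for \<tau>
  proof -
    have "\<tau> \<in> {t1..t2}" using that assms(11,13) by auto
    hence "\<rho> \<tau> = (y \<tau>)\<^sup>2" unfolding y_def using rho_nn by simp
    thus ?thesis using y_eq[OF that] by simp
  qed
  show ?thesis
  proof (intro exI conjI ballI)
    show "F t = c1 * sqrt t + c2 * t" if "t \<in> {s1..s2}" for t using F_eq that by blast
  next
    fix x assume x: "x \<in> {s1<..<s2}"
    have xpos: "x > 0" using x s1pos by auto
    have HD: "((\<lambda>t. c1 * sqrt t + c2 * t) has_real_derivative c1 / (2 * sqrt x) + c2) (at x)"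
      using xpos by (auto intro!: derivative_eq_intros simp: field_simps)
    have "(F has_real_derivative c1 / (2 * sqrt x) + c2) (at x)"
      by (rule has_field_derivative_transform_within_open[OF HD, of "{s1<..<s2}"])
         (use x F_eq in auto)
    hence dFx: "deriv F x = c1 / (2 * sqrt x) + c2" by (rule DERIV_imp_deriv)
    have "F x / x = c1 / sqrt x + c2"
      using F_eq[of x] x xpos by (auto simp: field_simps)
    hence e1: "F x / x - deriv F x = aa x" unfolding dFx aa_def by (simp add: field_simps)
    define q where "q = (\<lambda>\<tau>. (aa \<tau>)\<^sup>2)"
    have qc: "isCont q x" unfolding q_def aa_def using xpos by (intro continuous_intros) auto
    have x12: "x \<in> {t1..t2}" using x assms(11,13) by auto
    have "\<rho> x = q x"
    proof (rule ccontr)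
      assume ne: "\<rho> x \<noteq> q x"
      define e where "e = \<bar>\<rho> x - q x\<bar>"
      have e: "e > 0" using ne unfolding e_def by simp
      obtain d where d: "d > 0" "\<And>\<tau>. dist \<tau> x < d \<Longrightarrow> dist (q \<tau>) (q x) < e"
        using qc[unfolded continuous_at_eps_delta] e by blast
      show False
      proof (cases "\<rho> x > q x")
        case True
        have "max (x - d) s1 < x" using d x by auto
        then obtain \<tau> where \<tau>: "\<tau> \<in> {max (x - d) s1<..<x}" "\<tau> \<notin> C"
          using real_interval_avoid_countable_set[OF _ cC] by blast
        have "\<tau> \<in> {s1<..<s2} - C" using \<tau> x by auto
        hence "\<rho> \<tau> = q \<tau>" using rho_aa unfolding q_def by blast
        moreover have "\<rho> x \<le> \<rho> \<tau>" using rho_anti[of \<tau> x] \<tau> x12 assms(11) by auto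
        moreover have "dist (q \<tau>) (q x) < e" using d(2)[of \<tau>] \<tau> by (auto simp: dist_real_def)
        ultimately show False using True unfolding e_def dist_real_def by auto
      next
        case False
        hence lt: "\<rho> x < q x" using ne by simp
        have "x < min (x + d) s2" using d x by auto
        then obtain \<tau> where \<tau>: "\<tau> \<in> {x<..<min (x + d) s2}" "\<tau> \<notin> C"
          using real_interval_avoid_countable_set[OF _ cC] by blast
        have "\<tau> \<in> {s1<..<s2} - C" using \<tau> x by auto
        hence "\<rho> \<tau> = q \<tau>" using rho_aa unfolding q_def by blast
        moreover have "\<rho> \<tau> \<le> \<rho> x" using rho_anti[of x \<tau>] \<tau> x12 assms(13) by auto
        moreover have "dist (q \<tau>) (q x) < e" using d(2)[of \<tau>] \<tau> by (auto simp: dist_real_def)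
        ultimately show False using lt unfolding e_def dist_real_def by auto
      qed
    qed
    thus "\<rho> x = (F x / x - deriv F x)\<^sup>2" using e1 unfolding q_def by simp
  qed
qed


end
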